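(* Consider the online tolling setting described in the context, with O-D pairs and values of time drawn i.i.d. across periods $t\in[T]$ from a distribution $\mathcal{D}$ whose support has nonnegative values of time. Let $\bm{\pi}$ be the toll-update algorithm with step size $\gamma=1/\sqrt{T}$: $\boldsymbol{\tau}^{(1)}=\bm{0}$, in each period $t$ the users play an equilibrium under $\boldsymbol{\tau}^{(t)}$ with resulting edge flows $\bm{x}^t$, and $\boldsymbol{\tau}^{(t+1)}=(\boldsymbol{\tau}^{(t)}-\gamma(\bm{c}-\bm{x}^t))_+$ componentwise. Then its expected regret and expected constraint violation satisfy $$R_T(\bm{\pi})\le\frac{|E|\,(|\mathcal{U}|+\max_{e\in E}c_e)^2}{2}\sqrt{T},\qquad V_T(\bm{\pi})\le |E|\,\big(\max_{u\in\mathcal{U}}\lambda_u+\max_{e\in E}c_e+|\mathcal{U}|\big)\sqrt{T}.$$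
   Context: Network: directed graph $G=(V,E)$, edge capacities $\bm{c}=\{c_e\}_{e\in E}$ with $c_e\ge0$, fixed edge travel times $l_e\ge 0$; for a path $P$, $l_P=\sum_{e\in P}l_e$. A finite set $\mathcal{U}$ of users; user $u$ has a fixed outside-option cost $\lambda_u\ge 0$. In each period $t=1,\dots,T$ the vector $(\bm{w}^t,\bm{v}^t)=((w^t_u)_{u\in\mathcal{U}},(v^t_u)_{u\in\mathcal{U}})$ of O-D pairs and values of time is drawn i.i.d. from $\mathcal{D}$; $\mathcal{P}^t_u$ is the finite set of paths connecting $w^t_u$. Given nonnegative tolls $\boldsymbol{\tau}=\{\tau_e\}$, user $u$'s cost of path $P$ in period $t$ is $v^t_ul_P+\sum_{e\in P}\tau_e$, and an equilibrium is an assignment of each user to exactly one of a path in $\mathcal{P}^t_u$ or the outside option (binary $f^t_{P,u}$, $f^t_{o,u}$ summing to 1) that minimizes this cost among paths and the outside option (ties broken arbitrarily); edge flows are $x^t_e=\sum_{u}\sum_{P\in\mathcal{P}^t_u:e\in P}f^t_{P,u}$ (capacities need not be respected). A tolling policy chooses $\boldsymbol{\tau}^{(t)}$ as a function only of $\bm{x}^1,\dots,\bm{x}^{t-1}$. The total system cost in period $t$ is $U_t=\sum_u\big(v^t_u\sum_{P\in\mathcal{P}^t_u}l_Pf^t_{P,u}+\lambda_uf^t_{o,u}\big)$, and $U^*_t$ is the optimal value of $\min\sum_u(v^t_u\sum_{P}l_Pf_{P,u}+\lambda_uf_{o,u})$ over binary assignments with $\sum_Pf_{P,u}+f_{o,u}=1$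 for each $u$ and $\sum_u\sum_{P\ni e}f_{P,u}\le c_e$ for each $e$ (the offline optimum with full knowledge of period-$t$ data). Regret: $R_T(\bm{\pi})=\mathbb{E}[\sum_{t=1}^T(U_t-U^*_t)]$. Constraint violation: $V_T(\bm{\pi})=\mathbb{E}\big[\|(\sum_{t=1}^T(\bm{x}^t-\bm{c}))_+\|_2\big]$, with $(\cdot)_+$ the componentwise positive part. Expectations are over $\mathcal{D}$. *)

theory Defs
  imports "HOL-Probability.Probability"
begin

text \<open>A scenario (one period's data) is a pair (w, v): O-D pair w u and value of time v u
  for every user u. An assignment maps each user to either a path (Some P) or the
  outside option (None).\<close>

type_synonym ('u, 'v) scen = "('u \<Rightarrow> 'v \<times> 'v) \<times> ('u \<Rightarrow> real)"
type_synonym ('u, 'e) assign = "'u \<Rightarrow> 'e list option"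

definition simple_path :: "('e \<Rightarrow> 'v) \<Rightarrow> ('e \<Rightarrow> 'v) \<Rightarrow> 'v \<Rightarrow> 'v \<Rightarrow> 'e list \<Rightarrow> bool" where
  "simple_path src dst a b P \<longleftrightarrow>
     (P = [] \<and> a = b) \<or>
     (P \<noteq> [] \<and> src (hd P) = a \<and> dst (last P) = b \<and>
      (\<forall>i. Suc i < length P \<longrightarrow> dst (P ! i) = src (P ! Suc i)) \<and>
      distinct (src (hd P) # map dst P))"

definition od_paths :: "('e \<Rightarrow> 'v) \<Rightarrow> ('e \<Rightarrow> 'v) \<Rightarrow> 'v \<times> 'v \<Rightarrow> 'e list set" where
  "od_paths src dst w = {P. simple_path src dst (fst w) (snd w) P}"

definition path_len :: "('e \<Rightarrow> real) \<Rightarrow> 'e list \<Rightarrow> real" where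
  "path_len l P = (\<Sum>e\<leftarrow>P. l e)"

definition option_cost :: "('e \<Rightarrow> real) \<Rightarrow> ('u \<Rightarrow> real) \<Rightarrow> ('e \<Rightarrow> real) \<Rightarrow> ('u, 'v) scen
    \<Rightarrow> 'u \<Rightarrow> 'e list option \<Rightarrow> real" where
  "option_cost l lam tau s u ch =
     (case ch of None \<Rightarrow> lam u | Some P \<Rightarrow> snd s u * path_len l P + (\<Sum>e\<leftarrow>P. tau e))"

definition valid_assign :: "('e \<Rightarrow> 'v) \<Rightarrow> ('e \<Rightarrow> 'v) \<Rightarrow> ('u, 'v) scen \<Rightarrow> ('u, 'e) assign \<Rightarrow> bool" where
  "valid_assign src dst s f \<longleftrightarrow> (\<forall>u P. f u = Some P \<longrightarrow> P \<in> od_paths src dst (fst s u))"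

definition is_equilibrium :: "('e \<Rightarrow> 'v) \<Rightarrow> ('e \<Rightarrow> 'v) \<Rightarrow> ('e \<Rightarrow> real) \<Rightarrow> ('u \<Rightarrow> real)
    \<Rightarrow> ('e \<Rightarrow> real) \<Rightarrow> ('u, 'v) scen \<Rightarrow> ('u, 'e) assign \<Rightarrow> bool" where
  "is_equilibrium src dst l lam tau s f \<longleftrightarrow>
     valid_assign src dst s f \<and>
     (\<forall>u. (\<forall>P \<in> od_paths src dst (fst s u).
             option_cost l lam tau s u (f u) \<le> option_cost l lam tau s u (Some P)) \<and>
          option_cost l lam tau s u (f u) \<le> option_cost l lam tau s u None)"

definition edge_flow :: "('u, 'e) assign \<Rightarrow> 'e \<Rightarrow> real" where
  "edge_flow f e = real (card {u. \<exists>P. f u = Some P \<and> e \<in> set P})"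

definition sys_cost :: "('e \<Rightarrow> real) \<Rightarrow> ('u \<Rightarrow> real) \<Rightarrow> ('u, 'v) scen \<Rightarrow> ('u, 'e) assign \<Rightarrow> real" where
  "sys_cost l lam s f =
     (\<Sum>u\<in>UNIV. case f u of None \<Rightarrow> lam u | Some P \<Rightarrow> snd s u * path_len l P)"

definition opt_cost :: "('e \<Rightarrow> 'v) \<Rightarrow> ('e \<Rightarrow> 'v) \<Rightarrow> ('e \<Rightarrow> real) \<Rightarrow> ('u \<Rightarrow> real)
    \<Rightarrow> ('e \<Rightarrow> real) \<Rightarrow> ('u, 'v) scen \<Rightarrow> real" where
  "opt_cost src dst l lam c s =
     Min {sys_cost l lam s f | f. valid_assign src dst s f \<and> (\<forall>e. edge_flow f e \<le> c e)}"

text \<open>Toll sequence (periods indexed from 0): toll_seq .. 0 = 0, and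
  toll_seq .. (t+1) = (toll_seq .. t - gamma (c - x^t))_+ where x^t is the flow of the
  assignment A t (toll_seq .. t) played in period t.\<close>
primrec toll_seq :: "real \<Rightarrow> ('e \<Rightarrow> real) \<Rightarrow> (nat \<Rightarrow> ('e \<Rightarrow> real) \<Rightarrow> ('u, 'e) assign)
    \<Rightarrow> nat \<Rightarrow> 'e \<Rightarrow> real" where
  "toll_seq gamma c A 0 = (\<lambda>e. 0)"
| "toll_seq gamma c A (Suc t) =
     (\<lambda>e. max 0 (toll_seq gamma c A t e - gamma * (c e - edge_flow (A t (toll_seq gamma c A t)) e)))"

text \<open>Assignment played in period t along sample path omega, given the
  tie-breaking rule sel (sel t omega tau = equilibrium chosen in period t under tolls tau).\<close>
definition played :: "(nat \<Rightarrow> (nat \<Rightarrow> ('u, 'v) scen) \<Rightarrow> ('e \<Rightarrow> real) \<Rightarrow> ('u, 'e) assign)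
    \<Rightarrow> real \<Rightarrow> ('e \<Rightarrow> real) \<Rightarrow> (nat \<Rightarrow> ('u, 'v) scen) \<Rightarrow> nat \<Rightarrow> ('u, 'e) assign" where
  "played sel gamma c omega t = sel t omega (toll_seq gamma c (\<lambda>k. sel k omega) t)"

end

theory Submission
  imports Defs
begin


lemma od_distinct: "P \<in> od_paths src dst w \<Longrightarrow> distinct P"
  unfolding od_paths_def simple_path_def
  by (auto simp: distinct_map)

lemma integral_le_const:
  assumes "prob_space M" "AE x in M. f x \<le> (B::real)" "0 \<le> B"
  shows "integral\<^sup>L M f \<le> B"
proof (cases "integrable M f")
  case True
  interpret prob_space M by fact
  have "integral\<^sup>L M f \<le> integral\<^sup>L M (\<lambda>_. B)"
    by (rule integral_mono_AE[OF True]) (use assms in auto)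
  then show ?thesis by (simp add: prob_space)
next
  case False then show ?thesis using assms by (simp add: not_integrable_integral_eq)
qed

lemma edge_flow_bounds: "0 \<le> edge_flow (f :: ('u::finite,'e) assign) e"
  "edge_flow f e \<le> real CARD('u)"
  unfolding edge_flow_def by (auto intro: card_mono)

lemma toll_nonneg: "0 \<le> toll_seq g c A t e"
  by (cases t) auto

lemma cost_decomp:
  fixes h :: "('u::finite, 'e::finite) assign"
  assumes "valid_assign src dst s h"
  shows "(\<Sum>u\<in>UNIV. option_cost l lam tau s u (h u))
       = sys_cost l lam s h + (\<Sum>e\<in>UNIV. tau e * edge_flow h e)"
proof -
  define S where "S u = (case h u of None \<Rightarrow> {} | Some P \<Rightarrow> set P)" for u
  have 1: "option_cost l lam tau s u (h u) =
     (case h u of None \<Rightarrow> lam u | Some P \<Rightarrow> snd s u * path_len l P) + (\<Sum>e\<in>S u. tau e)" for u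
  proof (cases "h u")
    case (Some P)
    then have "distinct P" using assms od_distinct unfolding valid_assign_def by blast
    then show ?thesis using Some by (simp add: option_cost_def S_def sum_list_distinct_conv_sum_set)
  qed (simp add: option_cost_def S_def)
  have "(\<Sum>u\<in>UNIV. (\<Sum>e\<in>S u. tau e)) = (\<Sum>u\<in>UNIV. \<Sum>e\<in>UNIV. if e \<in> S u then tau e else 0)"
    by (simp add: sum.If_cases Int_absorb1)
  also have "\<dots> = (\<Sum>e\<in>UNIV. \<Sum>u\<in>UNIV. if e \<in> S u then tau e else 0)"
    by (rule sum.swap)
  also have "\<dots> = (\<Sum>e\<in>UNIV. tau e * edge_flow h e)"
  proof (rule sum.cong[OF refl])
    fix e
    have "{u. \<exists>P. h u = Some P \<and> e \<in> set P} = {u. e \<in> S u}"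
      by (auto simp: S_def split: option.splits)
    then show "(\<Sum>u\<in>UNIV. if e \<in> S u then tau e else 0) = tau e * edge_flow h e"
      by (simp add: sum.If_cases edge_flow_def)
  qed
  finally show ?thesis by (simp add: 1 sum.distrib sys_cost_def)
qed

lemma lagr:
  fixes f g :: "('u::finite, 'e::finite) assign"
  assumes eq: "is_equilibrium src dst l lam tau s f" and tau: "\<forall>e. 0 \<le> tau e"
    and g: "valid_assign src dst s g" "\<forall>e. edge_flow g e \<le> c e"
  shows "sys_cost l lam s f - sys_cost l lam s g \<le> (\<Sum>e\<in>UNIV. tau e * (c e - edge_flow f e))"
proof -
  have vf: "valid_assign src dst s f" using eq by (simp add: is_equilibrium_def)
  have "(\<Sum>u\<in>UNIV. option_cost l lam tau s u (f u)) \<le> (\<Sum>u\<in>UNIV. option_cost l lam tau s u (g u))"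
  proof (rule sum_mono)
    fix u
    show "option_cost l lam tau s u (f u) \<le> option_cost l lam tau s u (g u)"
      using eq g(1) unfolding is_equilibrium_def valid_assign_def
      by (cases "g u") auto
  qed
  moreover have "(\<Sum>e\<in>UNIV. tau e * edge_flow g e) \<le> (\<Sum>e\<in>UNIV. tau e * c e)"
    using tau g(2) by (intro sum_mono mult_left_mono) auto
  ultimately show ?thesis using cost_decomp[OF vf, of l lam tau] cost_decomp[OF g(1), of l lam tau]
    by (simp add: right_diff_distrib sum_subtractf)
qed

lemma opt_exists:
  fixes s :: "('u::finite, 'v) scen"
  assumes c: "\<forall>e. 0 \<le> c (e::'e::finite)"
  shows "\<exists>g. valid_assign src dst s g \<and> (\<forall>e. edge_flow g e \<le> c e)
            \<and> opt_cost src dst l lam c s = sys_cost l lam s g"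
proof -
  let ?S = "{sys_cost l lam s f | f. valid_assign src dst s f \<and> (\<forall>e. edge_flow f e \<le> c e)}"
  let ?B = "insert None (Some ` {P::'e list. distinct P})"
  have fB: "finite ?B" using finite_subset_distinct[of "UNIV::'e set"] by simp
  have "finite {f::('u,'e) assign. \<forall>x. (x \<in> UNIV \<longrightarrow> f x \<in> ?B) \<and> (x \<notin> UNIV \<longrightarrow> f x = None)}"
    by (rule finite_set_of_finite_funs) (use fB in auto)
  then have fF: "finite {f::('u,'e) assign. \<forall>x. f x \<in> ?B}" by simp
  have "?S \<subseteq> sys_cost l lam s ` {f::('u,'e) assign. \<forall>x. f x \<in> ?B}"
  proof
    fix y assume "y \<in> ?S"
    then obtain f where f: "y = sys_cost l lam s f" "valid_assign src dst s f" by blast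
    have "\<forall>x. f x \<in> ?B"
    proof
      fix x show "f x \<in> ?B" using f(2) od_distinct[of _ src dst "fst s x"] unfolding valid_assign_def
        by (cases "f x") auto
    qed
    then show "y \<in> sys_cost l lam s ` {f::('u,'e) assign. \<forall>x. f x \<in> ?B}" using f by blast
  qed
  then have fin: "finite ?S" using fF finite_subset by blast
  have "sys_cost l lam s (\<lambda>_. None) \<in> ?S"
    using c by (auto simp: valid_assign_def edge_flow_def)
  then have "?S \<noteq> {}" by blast
  from Min_in[OF fin this] show ?thesis unfolding opt_cost_def by blast
qed

lemma tele:
  fixes A :: "nat \<Rightarrow> ('e::finite \<Rightarrow> real) \<Rightarrow> ('u::finite, 'e) assign"
  shows "2 * g * (\<Sum>t<n. \<Sum>e\<in>UNIV. toll_seq g c A t e * (c e - edge_flow (A t (toll_seq g c A t)) e))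
     + (\<Sum>e\<in>UNIV. (toll_seq g c A n e)\<^sup>2)
     \<le> g\<^sup>2 * (\<Sum>t<n. \<Sum>e\<in>UNIV. (c e - edge_flow (A t (toll_seq g c A t)) e)\<^sup>2)"
proof (induction n)
  case 0 then show ?case by simp
next
  case (Suc n)
  let ?tau = "toll_seq g c A n"
  let ?d = "\<lambda>e. c e - edge_flow (A n ?tau) e"
  have "(\<Sum>e\<in>UNIV. (toll_seq g c A (Suc n) e)\<^sup>2) \<le> (\<Sum>e\<in>UNIV. (?tau e - g * ?d e)\<^sup>2)"
  proof (rule sum_mono)
    fix e
    have "(max 0 (?tau e - g * ?d e))\<^sup>2 \<le> (?tau e - g * ?d e)\<^sup>2"
      by (cases "0 \<le> ?tau e - g * ?d e") (auto simp: max_def)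
    then show "(toll_seq g c A (Suc n) e)\<^sup>2 \<le> (?tau e - g * ?d e)\<^sup>2" by simp
  qed
  also have "\<dots> = (\<Sum>e\<in>UNIV. (?tau e)\<^sup>2) - 2 * g * (\<Sum>e\<in>UNIV. ?tau e * ?d e) + g\<^sup>2 * (\<Sum>e\<in>UNIV. (?d e)\<^sup>2)"
  proof -
    have pt: "(?tau e - g * ?d e)\<^sup>2 = (?tau e)\<^sup>2 - 2 * g * (?tau e * ?d e) + g\<^sup>2 * (?d e)\<^sup>2" for e
      by (simp add: power2_eq_square algebra_simps)
    show ?thesis unfolding pt by (simp only: sum.distrib sum_subtractf sum_distrib_left[symmetric])
  qed
  finally show ?case using Suc.IH by (simp add: algebra_simps)
qed

lemma lower:
  fixes A :: "nat \<Rightarrow> ('e::finite \<Rightarrow> real) \<Rightarrow> ('u::finite, 'e) assign"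
  shows "g * (\<Sum>t<n. edge_flow (A t (toll_seq g c A t)) e - c e) \<le> toll_seq g c A n e"
proof (induction n)
  case 0 then show ?case by simp
next
  case (Suc n) then show ?case by (simp add: algebra_simps)
qed

lemma zero_flow:
  fixes f :: "('u::finite, 'e::finite) assign"
  assumes eq: "is_equilibrium src dst l lam tau s f" and tau: "\<forall>e. 0 \<le> tau e"
    and v: "\<forall>u. 0 \<le> snd s u" and l: "\<forall>e. 0 \<le> l e" and big: "\<forall>u. lam u < tau e"
  shows "edge_flow f e = 0"
proof -
  have "{u. \<exists>P. f u = Some P \<and> e \<in> set P} = {}"
  proof (rule ccontr)
    assume "{u. \<exists>P. f u = Some P \<and> e \<in> set P} \<noteq> {}"
    then obtain u P where u: "f u = Some P" "e \<in> set P" by blast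
    then have dP: "distinct P" using eq od_distinct unfolding is_equilibrium_def valid_assign_def by blast
    have "0 \<le> path_len l P" unfolding path_len_def using l by (induction P) auto
    then have "0 \<le> snd s u * path_len l P" using v by simp
    moreover have "tau e \<le> (\<Sum>e\<leftarrow>P. tau e)"
      using dP u(2) tau by (simp add: sum_list_distinct_conv_sum_set member_le_sum)
    ultimately have "tau e \<le> option_cost l lam tau s u (f u)" using u by (simp add: option_cost_def)
    moreover have "option_cost l lam tau s u (f u) \<le> lam u"
    proof -
      have "option_cost l lam tau s u (f u) \<le> option_cost l lam tau s u None"
        using eq unfolding is_equilibrium_def by blast
      then show ?thesis by (simp add: option_cost_def)
    qed
    ultimately show False using big[rule_format, of u] by linarith
  qed
  then show ?thesis by (simp add: edge_flow_def)
qed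

lemma upper:
  fixes A :: "nat \<Rightarrow> ('e::finite \<Rightarrow> real) \<Rightarrow> ('u::finite, 'e) assign"
  assumes eq: "\<And>t tau. t < n \<Longrightarrow> \<forall>e. 0 \<le> tau e \<Longrightarrow> is_equilibrium src dst l lam tau (s t) (A t tau)"
    and v: "\<And>t. t < n \<Longrightarrow> \<forall>u. 0 \<le> snd (s t) u" and l: "\<forall>e. 0 \<le> l e"
    and lam: "\<forall>u. 0 \<le> lam u" and c: "\<forall>e. 0 \<le> c e" and g: "0 \<le> g"
  shows "toll_seq g c A n e \<le> Max (range lam) + g * real CARD('u)"
  using eq v
proof (induction n)
  case 0
  have "lam undefined \<le> Max (range lam)" by simp
  then show ?case using lam g by (simp add: add_nonneg_nonneg order_trans[OF _ \<open>lam undefined \<le> _\<close>])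
next
  case (Suc n)
  let ?tau = "toll_seq g c A n"
  have IH: "?tau e \<le> Max (range lam) + g * real CARD('u)" using Suc by auto
  have fl: "0 \<le> edge_flow (A n ?tau) e" "edge_flow (A n ?tau) e \<le> real CARD('u)"
    by (rule edge_flow_bounds(1), rule edge_flow_bounds(2))
  show ?case
  proof (cases "Max (range lam) < ?tau e")
    case True
    have "\<forall>u. lam u < ?tau e" using True by (metis Max_ge finite rangeI order.strict_trans1 finite_imageI)
    moreover have tn: "\<forall>e. 0 \<le> ?tau e" by (simp add: toll_nonneg)
    moreover have "is_equilibrium src dst l lam ?tau (s n) (A n ?tau)" using Suc.prems(1)[of n ?tau] tn by simp
    moreover have "\<forall>u. 0 \<le> snd (s n) u" using Suc.prems(2)[of n] by simp
    ultimately have "edge_flow (A n ?tau) e = 0"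
      using zero_flow[OF _ _ _ l] by blast
    moreover have "0 \<le> g * c e" using g c by simp
    ultimately show ?thesis using IH toll_nonneg[of g c A n e]
      by (simp add: max_def)
  next
    case False
    have "g * edge_flow (A n ?tau) e \<le> g * real CARD('u)" using fl g by (simp add: mult_left_mono)
    moreover have "0 \<le> g * c e" using g c by simp
    moreover have "0 \<le> Max (range lam) + g * real CARD('u)"
      using IH toll_nonneg[of g c A n e] by linarith
    moreover have "?tau e \<le> Max (range lam)" using False by linarith
    ultimately have "?tau e - g * (c e - edge_flow (A n ?tau) e) \<le> Max (range lam) + g * real CARD('u)"
      by (simp add: right_diff_distrib)
    then show ?thesis using \<open>0 \<le> Max (range lam) + g * real CARD('u)\<close> by simp
  qed
qed

lemma regret_pw:
  fixes src dst :: "'e::finite \<Rightarrow> 'v" and lam :: "'u::finite \<Rightarrow> real"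
    and sel :: "nat \<Rightarrow> (nat \<Rightarrow> ('u, 'v) scen) \<Rightarrow> ('e \<Rightarrow> real) \<Rightarrow> ('u, 'e) assign"
  assumes c_nonneg: "\<forall>e. 0 \<le> c e"
    and sel_eq: "\<forall>t omega tau. (\<forall>e. 0 \<le> tau e) \<longrightarrow>
                   is_equilibrium src dst l lam tau (omega t) (sel t omega tau)"
  shows "(\<Sum>t<T. sys_cost l lam (omega t) (played sel (1 / sqrt T) c omega t)
                           - opt_cost src dst l lam c (omega t))
         \<le> real CARD('e) * (real CARD('u) + Max (range c))\<^sup>2 / 2 * sqrt T"
proof (cases "T = 0")
  case True then show ?thesis by simp
next
  case False
  define g where "g = 1 / sqrt T"
  define A where "A = (\<lambda>k. sel k omega)"
  define B where "B = real CARD('u) + Max (range c)"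
  let ?tau = "\<lambda>t. toll_seq g c A t"
  let ?d = "\<lambda>t e. c e - edge_flow (A t (?tau t)) e"
  have gpos: "0 < g" using False by (simp add: g_def)
  have pl: "played sel g c omega t = A t (?tau t)" for t by (simp add: played_def A_def)
  have step: "sys_cost l lam (omega t) (A t (?tau t)) - opt_cost src dst l lam c (omega t)
      \<le> (\<Sum>e\<in>UNIV. ?tau t e * ?d t e)" for t
  proof -
    obtain h where h: "valid_assign src dst (omega t) h" "\<forall>e. edge_flow h e \<le> c e"
        "opt_cost src dst l lam c (omega t) = sys_cost l lam (omega t) h"
      using opt_exists[OF c_nonneg] by blast
    have tn: "\<forall>e. 0 \<le> ?tau t e" by (simp add: toll_nonneg)
    have "is_equilibrium src dst l lam (?tau t) (omega t) (A t (?tau t))"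
      using sel_eq tn by (simp add: A_def)
    from lagr[OF this tn h(1) h(2)] show ?thesis using h(3) by simp
  qed
  let ?S = "\<Sum>t<T. \<Sum>e\<in>UNIV. ?tau t e * ?d t e"
  let ?Q = "\<Sum>t<T. \<Sum>e\<in>UNIV. (?d t e)\<^sup>2"
  have "2 * g * ?S + (\<Sum>e\<in>UNIV. (?tau T e)\<^sup>2) \<le> g\<^sup>2 * ?Q" by (rule tele)
  moreover have "0 \<le> (\<Sum>e\<in>UNIV. (?tau T e)\<^sup>2)" by (simp add: sum_nonneg)
  ultimately have "2 * g * ?S \<le> g * (g * ?Q)" by (simp add: power2_eq_square)
  then have S: "?S \<le> g * ?Q / 2" using gpos by simp
  have Mc: "c e \<le> Max (range c)" for e by simp
  have dB: "(?d t e)\<^sup>2 \<le> B\<^sup>2" for t e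
  proof -
    have "0 \<le> edge_flow (A t (?tau t)) e" "edge_flow (A t (?tau t)) e \<le> real CARD('u)"
      by (rule edge_flow_bounds(1), rule edge_flow_bounds(2))
    then have "\<bar>?d t e\<bar> \<le> B" using Mc[of e] c_nonneg[rule_format, of e] unfolding B_def abs_le_iff by linarith
    from power_mono[OF this abs_ge_zero, of 2] show ?thesis by simp
  qed
  have "?Q \<le> (\<Sum>t<T. \<Sum>e\<in>(UNIV::'e set). B\<^sup>2)"
    by (intro sum_mono dB)
  also have "\<dots> = real T * real CARD('e) * B\<^sup>2" by simp
  finally have Q: "?Q \<le> real T * real CARD('e) * B\<^sup>2" .
  have gT: "g * real T = sqrt T" using False by (simp add: g_def real_div_sqrt)
  have "(\<Sum>t<T. sys_cost l lam (omega t) (played sel g c omega t) - opt_cost src dst l lam c (omega t))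
      \<le> ?S" unfolding pl by (intro sum_mono step)
  also have "\<dots> \<le> g * (real T * real CARD('e) * B\<^sup>2) / 2"
    using S Q gpos by (smt (verit) divide_right_mono mult_left_mono)
  also have "\<dots> = real CARD('e) * B\<^sup>2 / 2 * (g * real T)" by simp
  also have "\<dots> = real CARD('e) * B\<^sup>2 / 2 * sqrt T" unfolding gT ..
  finally show ?thesis unfolding B_def g_def .
qed

lemma viol_pw:
  fixes src dst :: "'e::finite \<Rightarrow> 'v" and lam :: "'u::finite \<Rightarrow> real"
    and sel :: "nat \<Rightarrow> (nat \<Rightarrow> ('u, 'v) scen) \<Rightarrow> ('e \<Rightarrow> real) \<Rightarrow> ('u, 'e) assign"
  assumes c_nonneg: "\<forall>e. 0 \<le> c e"
    and l_nonneg: "\<forall>e. 0 \<le> l e"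
    and lam_nonneg: "\<forall>u. 0 \<le> lam u"
    and sel_eq: "\<forall>t omega tau. (\<forall>e. 0 \<le> tau e) \<longrightarrow>
                   is_equilibrium src dst l lam tau (omega t) (sel t omega tau)"
    and v: "\<forall>t<T. \<forall>u. 0 \<le> snd (omega t) u"
  shows "sqrt (\<Sum>e\<in>UNIV. (max 0 (\<Sum>t<T. edge_flow (played sel (1 / sqrt T) c omega t) e - c e))\<^sup>2)
         \<le> real CARD('e) * (Max (range lam) + Max (range c) + real CARD('u)) * sqrt T"
proof (cases "T = 0")
  case True then show ?thesis by simp
next
  case False
  define g where "g = 1 / sqrt T"
  define A where "A = (\<lambda>k. sel k omega)"
  define K where "K = (Max (range lam) + Max (range c) + real CARD('u)) * sqrt T"
  let ?tau = "\<lambda>t. toll_seq g c A t"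
  have gpos: "0 < g" using False by (simp add: g_def)
  have sT1: "1 \<le> sqrt T" using False by simp
  have pl: "played sel g c omega t = A t (?tau t)" for t by (simp add: played_def A_def)
  have Ml: "0 \<le> Max (range lam)" proof -
    have "lam undefined \<le> Max (range lam)" by simp
    then show ?thesis using lam_nonneg[rule_format, of undefined] by linarith
  qed
  have Mc: "0 \<le> Max (range c)" proof -
    have "c undefined \<le> Max (range c)" by simp
    then show ?thesis using c_nonneg[rule_format, of undefined] by linarith
  qed
  have K0: "0 \<le> K" unfolding K_def using Ml Mc by simp
  have ae: "max 0 (\<Sum>t<T. edge_flow (A t (?tau t)) e - c e) \<le> K" for e
  proof -
    have up: "?tau T e \<le> Max (range lam) + g * real CARD('u)"
    proof (rule upper[where s=omega and src=src and dst=dst and l=l])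
      show "\<And>t tau. t < T \<Longrightarrow> \<forall>e. 0 \<le> tau e \<Longrightarrow> is_equilibrium src dst l lam tau (omega t) (A t tau)"
        using sel_eq by (simp add: A_def)
    qed (use v l_nonneg lam_nonneg c_nonneg gpos in auto)
    have lo: "g * (\<Sum>t<T. edge_flow (A t (?tau t)) e - c e) \<le> ?tau T e" by (rule lower)
    have "(\<Sum>t<T. edge_flow (A t (?tau t)) e - c e) \<le> sqrt T * ?tau T e"
      using mult_left_mono[OF lo, of "sqrt T"] False by (simp add: g_def)
    also have "\<dots> \<le> sqrt T * (Max (range lam) + g * real CARD('u))"
      using up by (simp add: mult_left_mono)
    also have "\<dots> = sqrt T * Max (range lam) + real CARD('u)"
      using False by (simp add: g_def algebra_simps)
    also have "\<dots> \<le> K"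
    proof -
      have h1: "0 \<le> Max (range c) * sqrt T" using Mc by simp
      have h2: "real CARD('u) * 1 \<le> real CARD('u) * sqrt T" by (rule mult_left_mono[OF sT1]) simp
      have "K = sqrt T * Max (range lam) + Max (range c) * sqrt T + real CARD('u) * sqrt T"
        unfolding K_def by (simp add: algebra_simps)
      then show ?thesis using h1 h2 by linarith
    qed
    finally show ?thesis using K0 by simp
  qed
  have "(\<Sum>e\<in>UNIV. (max 0 (\<Sum>t<T. edge_flow (A t (?tau t)) e - c e))\<^sup>2)
      \<le> (\<Sum>e\<in>(UNIV::'e set). K\<^sup>2)"
    by (intro sum_mono power_mono ae) simp
  also have "\<dots> = real CARD('e) * K\<^sup>2" by simp
  also have "\<dots> \<le> (real CARD('e) * K)\<^sup>2"
  proof -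
    have "1 \<le> real CARD('e)" by simp
    then have "real CARD('e) \<le> real CARD('e) ^ 2" by (simp add: power2_eq_square)
    then show ?thesis by (simp add: power_mult_distrib mult_right_mono)
  qed
  finally have "sqrt (\<Sum>e\<in>UNIV. (max 0 (\<Sum>t<T. edge_flow (A t (?tau t)) e - c e))\<^sup>2)
      \<le> sqrt ((real CARD('e) * K)\<^sup>2)" by (rule real_sqrt_le_mono)
  also have "\<dots> = real CARD('e) * K" using K0 by simp
  finally have "sqrt (\<Sum>e\<in>UNIV. (max 0 (\<Sum>t<T. edge_flow (A t (?tau t)) e - c e))\<^sup>2)
      \<le> real CARD('e) * K" .
  then show ?thesis unfolding g_def[symmetric] pl by (simp add: K_def mult.assoc)
qed

lemma AE_vot:
  fixes T :: nat
  assumes D: "prob_space D" and vot: "AE s in D. \<forall>u. 0 \<le> snd s u"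
  shows "AE omega in PiM {..<T} (\<lambda>_. D). \<forall>t<T. \<forall>u. 0 \<le> snd (omega t) u"
proof -
  have "AE omega in PiM {..<T} (\<lambda>_. D). \<forall>t\<in>{..<T}. \<forall>u. 0 \<le> snd (omega t) u"
  proof (rule eventually_ball_finite)
    show "finite {..<T}" by simp
    show "\<forall>t\<in>{..<T}. AE omega in PiM {..<T} (\<lambda>_. D). \<forall>u. 0 \<le> snd (omega t) u"
    proof
      fix t assume t: "t \<in> {..<T}"
      show "AE omega in PiM {..<T} (\<lambda>_. D). \<forall>u. 0 \<le> snd (omega t) u"
        using AE_PiM_component[of "{..<T}" "\<lambda>_. D" t "\<lambda>s. \<forall>u. 0 \<le> snd s u"] D vot t by simp
    qed
  qed
  then show ?thesis by (rule eventually_mono) auto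
qed


theorem theorem2:
  fixes src dst :: "'e::finite \<Rightarrow> 'v"
    and l c :: "'e \<Rightarrow> real"
    and lam :: "'u::finite \<Rightarrow> real"
    and D :: "('u, 'v) scen measure"
    and sel :: "nat \<Rightarrow> (nat \<Rightarrow> ('u, 'v) scen) \<Rightarrow> ('e \<Rightarrow> real) \<Rightarrow> ('u, 'e) assign"
    and T :: nat
  assumes D: "prob_space D"
    and vot_nonneg: "AE s in D. \<forall>u. 0 \<le> snd s u"
    and c_nonneg: "\<forall>e. 0 \<le> c e"
    and l_nonneg: "\<forall>e. 0 \<le> l e"
    and lam_nonneg: "\<forall>u. 0 \<le> lam u"
    and sel_eq: "\<forall>t omega tau. (\<forall>e. 0 \<le> tau e) \<longrightarrow>
                   is_equilibrium src dst l lam tau (omega t) (sel t omega tau)"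
  shows "integral\<^sup>L (PiM {..<T} (\<lambda>_. D))
           (\<lambda>omega. \<Sum>t<T. sys_cost l lam (omega t) (played sel (1 / sqrt T) c omega t)
                           - opt_cost src dst l lam c (omega t))
         \<le> real CARD('e) * (real CARD('u) + Max (range c))\<^sup>2 / 2 * sqrt T
       \<and> integral\<^sup>L (PiM {..<T} (\<lambda>_. D))
           (\<lambda>omega. sqrt (\<Sum>e\<in>UNIV. (max 0 (\<Sum>t<T. edge_flow (played sel (1 / sqrt T) c omega t) e - c e))\<^sup>2))
         \<le> real CARD('e) * (Max (range lam) + Max (range c) + real CARD('u)) * sqrt T"
  proof
  have Mc: "0 \<le> Max (range c)"
  proof -
    have "c undefined \<le> Max (range c)" by simp
    then show ?thesis using c_nonneg[rule_format, of undefined] by linarith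
  qed
  have Ml: "0 \<le> Max (range lam)"
  proof -
    have "lam undefined \<le> Max (range lam)" by simp
    then show ?thesis using lam_nonneg[rule_format, of undefined] by linarith
  qed
  have P: "prob_space (PiM {..<T} (\<lambda>_. D))" by (rule prob_space_PiM) (use D in auto)
  show "integral\<^sup>L (PiM {..<T} (\<lambda>_. D))
           (\<lambda>omega. \<Sum>t<T. sys_cost l lam (omega t) (played sel (1 / sqrt T) c omega t)
                           - opt_cost src dst l lam c (omega t))
         \<le> real CARD('e) * (real CARD('u) + Max (range c))\<^sup>2 / 2 * sqrt T"
    by (rule integral_le_const[OF P]) (use regret_pw[OF c_nonneg sel_eq] Mc in auto)
  show "integral\<^sup>L (PiM {..<T} (\<lambda>_. D))
           (\<lambda>omega. sqrt (\<Sum>e\<in>UNIV. (max 0 (\<Sum>t<T. edge_flow (played sel (1 / sqrt T) c omega t) e - c e))\<^sup>2))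
         \<le> real CARD('e) * (Max (range lam) + Max (range c) + real CARD('u)) * sqrt T"
  proof (rule integral_le_const[OF P])
    show "AE omega in PiM {..<T} (\<lambda>_. D).
      sqrt (\<Sum>e\<in>UNIV. (max 0 (\<Sum>t<T. edge_flow (played sel (1 / sqrt T) c omega t) e - c e))\<^sup>2)
         \<le> real CARD('e) * (Max (range lam) + Max (range c) + real CARD('u)) * sqrt T"
      using AE_vot[OF D vot_nonneg, of T]
      by (rule eventually_mono) (rule viol_pw[OF c_nonneg l_nonneg lam_nonneg sel_eq])
    show "0 \<le> real CARD('e) * (Max (range lam) + Max (range c) + real CARD('u)) * sqrt T"
      using Mc Ml by simp
  qed
qed

end
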